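(* Let $\omega\in[n]^*$, $i\in[n]$, and $x\in B^M_\omega:=M_\omega B_\omega$. Then (1) $x-M_\omega e_i\in B^M_\omega$ or $x-M_\omega e_i\le0$ (or both); and (2) $x+M_\omega e_i\in B^M_\omega$ or $x+M_\omega e_i\ge u_\omega$ (or both). Inequalities are coordinatewise.
   Context: Let $[n]=\{1,\dots,n\}$, $e_1,\dots,e_n$ the standard basis of $\mathbb{Z}^n$; $\varepsilon$ is the empty word, $*$ concatenation. For words $\omega$ over $[n]$ define recursively $\delta^i_\omega\in\mathbb{Z}^n$: $\delta^i_\varepsilon=e_i$; $\delta^j_{\omega*j}=\delta^j_\omega$, $\delta^i_{\omega*j}=\delta^i_\omega-\delta^j_\omega$ for $i\ne j$. Let $B_\varepsilon=\{0\}$, $B_{\omega*j}=B_\omega+\{0,\delta^j_\omega\}$ (Minkowski sum). Let $M_\omega=(\delta^1_\omega\ \cdots\ \delta^n_\omega)^{-1}$ (inverse of the matrix with columns $\delta^i_\omega$). For $k\in[n]$ let $D^k=\mathrm{id}+e_k(\mathbb{1}-e_k)^T$ with $\mathbb{1}=(1,\dots,1)^T$. Define $u_\varepsilon=0$, $u_{\omega*j}=e_j+D^j u_\omega$. *)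

theory Defs
  imports "HOL-Analysis.Analysis"
begin

(* The alphabet [n] is represented by a finite type 'n (so n = CARD('n)),
   vectors in Z^n by int^'n, words by lists ('n list), with
   \<omega> * j  =  \<omega> @ [j].  The auxiliary "R" functions take the REVERSED word,
   so that the recursion on the last letter becomes primitive recursion. *)

primrec deltaR :: "'n::finite list \<Rightarrow> 'n \<Rightarrow> int^'n" where
  "deltaR [] i = axis i 1"
| "deltaR (j # w) i = (if i = j then deltaR w j else deltaR w i - deltaR w j)"

definition delta :: "'n::finite list \<Rightarrow> 'n \<Rightarrow> int^'n" where
  "delta \<omega> i = deltaR (rev \<omega>) i"

primrec BR :: "'n::finite list \<Rightarrow> (int^'n) set" where
  "BR [] = {0}"
| "BR (j # w) = {b + c | b c. b \<in> BR w \<and> c \<in> {0, deltaR w j}}"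

definition B :: "'n::finite list \<Rightarrow> (int^'n) set" where
  "B \<omega> = BR (rev \<omega>)"

definition deltaMat :: "'n::finite list \<Rightarrow> int^'n^'n" where
  "deltaMat \<omega> = (\<chi> a b. delta \<omega> b $ a)"

definition M :: "'n::finite list \<Rightarrow> int^'n^'n" where
  "M \<omega> = matrix_inv (deltaMat \<omega>)"

definition D :: "'n::finite \<Rightarrow> int^'n^'n" where
  "D k = mat 1 + (\<chi> a b. if a = k \<and> b \<noteq> k then 1 else 0)"

primrec uR :: "'n::finite list \<Rightarrow> int^'n" where
  "uR [] = 0"
| "uR (j # w) = axis j 1 + D j *v uR w"

definition u :: "'n::finite list \<Rightarrow> int^'n" where
  "u \<omega> = uR (rev \<omega>)"

definition BM :: "'n::finite list \<Rightarrow> (int^'n) set" where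
  "BM \<omega> = (\<lambda>b. M \<omega> *v b) ` B \<omega>"

end

theory Submission
  imports Defs
begin

definition NN :: "'n::finite \<Rightarrow> int^'n^'n" where
  "NN j = (\<chi> a b. if a = j \<and> b \<noteq> j then 1 else 0)"

definition dm :: "'n::finite list \<Rightarrow> int^'n^'n" where
  "dm r = (\<chi> a b. deltaR r b $ a)"

primrec Minv :: "'n::finite list \<Rightarrow> int^'n^'n" where
  "Minv [] = mat 1"
| "Minv (j # r) = D j ** Minv r"

lemma NN_sq: "NN j ** NN j = 0"
  by (auto simp: NN_def matrix_matrix_mult_def vec_eq_iff intro!: sum.neutral)

lemma msub_r: "((X::int^'n::finite^'n) - Y) ** Z = X ** Z - Y ** Z"
  by (simp add: vec_eq_iff matrix_matrix_mult_def sum_subtractf algebra_simps)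

lemma msub_l: "(X::int^'n::finite^'n) ** (Y - Z) = X ** Y - X ** Z"
  by (simp add: vec_eq_iff matrix_matrix_mult_def sum_subtractf algebra_simps)

lemma madd_r: "((X::int^'n::finite^'n) + Y) ** Z = X ** Z + Y ** Z"
  by (simp add: vec_eq_iff matrix_matrix_mult_def sum.distrib algebra_simps)

lemma D_E: "D j ** (mat 1 - NN j) = mat 1"
  unfolding D_def NN_def[symmetric]
  by (simp add: msub_l madd_r matrix_add_ldistrib NN_sq)

lemma E_D: "(mat 1 - NN j) ** D j = mat 1"
  unfolding D_def NN_def[symmetric]
  by (simp add: msub_r matrix_add_ldistrib NN_sq)

lemma dmN: "(dm r ** NN j) $ a $ b = (if b \<noteq> j then deltaR r j $ a else 0)"
proof -
  have "(dm r ** NN j) $ a $ b = (\<Sum>k\<in>UNIV. deltaR r k $ a * (if k = j \<and> b \<noteq> j then 1 else 0))"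
    by (simp add: matrix_matrix_mult_def dm_def NN_def)
  also have "\<dots> = (\<Sum>k\<in>UNIV. if k = j then (if b \<noteq> j then deltaR r j $ a else 0) else 0)"
    by (rule sum.cong) auto
  finally show ?thesis by simp
qed

lemma dm_cons: "dm (j # r) = dm r ** (mat 1 - NN j)"
  unfolding msub_l by (auto simp: vec_eq_iff dmN) (auto simp: dm_def)

lemma Minv_inv: "dm r ** Minv r = mat 1 \<and> Minv r ** dm r = mat 1"
proof (induction r)
  case Nil
  have "dm [] = (mat 1 :: int^'a^'a)" by (auto simp: dm_def mat_def vec_eq_iff axis_def)
  thus ?case by simp
next
  case (Cons j r)
  have "dm (j#r) ** Minv (j#r) = dm r ** ((mat 1 - NN j) ** D j) ** Minv r"
    by (simp add: dm_cons matrix_mul_assoc)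
  also have "\<dots> = mat 1" using Cons by (simp add: E_D)
  finally have 1: "dm (j#r) ** Minv (j#r) = mat 1" .
  have "Minv (j#r) ** dm (j#r) = D j ** (Minv r ** dm r) ** (mat 1 - NN j)"
    by (simp add: dm_cons matrix_mul_assoc)
  also have "\<dots> = mat 1" using Cons by (simp add: D_E)
  finally show ?case using 1 by simp
qed

lemma M_eq: "M w = Minv (rev w)"
proof -
  have dd: "deltaMat w = dm (rev w)" by (simp add: deltaMat_def dm_def delta_def)
  let ?P = "\<lambda>A'. deltaMat w ** A' = mat 1 \<and> A' ** deltaMat w = mat 1"
  have p: "?P (Minv (rev w))" using Minv_inv dd by simp
  hence q: "?P (M w)" unfolding M_def matrix_inv_def by (rule someI)
  have "M w = M w ** (deltaMat w ** Minv (rev w))" using p by simp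
  also have "\<dots> = Minv (rev w)" using q by (simp add: matrix_mul_assoc)
  finally show ?thesis .
qed

definition BMR :: "'n::finite list \<Rightarrow> (int^'n) set" where
  "BMR r = (\<lambda>b. Minv r *v b) ` BR r"

lemma BM_eq: "BM w = BMR (rev w)"
  by (simp add: BM_def BMR_def M_eq B_def)

lemma Minv_delta: "Minv r *v deltaR r j = axis j 1"
proof -
  have "deltaR r j = dm r *v axis j 1"
    by (simp add: dm_def matrix_vector_mult_def vec_eq_iff axis_def if_distrib cong: if_cong)
  hence "Minv r *v deltaR r j = (Minv r ** dm r) *v axis j 1"
    by (simp add: matrix_vector_mul_assoc)
  thus ?thesis using Minv_inv[of r] by simp
qed

lemma BMR_cons_E:
  assumes "x \<in> BMR (j#r)"
  shows "\<exists>y\<in>BMR r. x = D j *v y \<or> x = D j *v (y + axis j 1)"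
proof -
  obtain b c where bc: "b \<in> BR r" "c \<in> {0, deltaR r j}" "x = Minv (j#r) *v (b + c)"
    using assms by (auto simp: BMR_def)
  have x: "x = D j *v (Minv r *v b + Minv r *v c)"
    using bc(3) by (simp add: matrix_vector_mul_assoc[symmetric] matrix_vector_right_distrib)
  have y: "Minv r *v b \<in> BMR r" using bc(1) by (simp add: BMR_def)
  show ?thesis using bc(2) x y Minv_delta[of r j] by auto
qed

lemma BMR_cons_I0: "y \<in> BMR r \<Longrightarrow> D j *v y \<in> BMR (j#r)"
proof -
  assume "y \<in> BMR r"
  then obtain b where b: "b \<in> BR r" "y = Minv r *v b" by (auto simp: BMR_def)
  have "b + 0 \<in> BR (j#r)" unfolding BR.simps using b(1) by blast
  hence "b \<in> BR (j#r)" by simp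
  moreover have "D j *v y = Minv (j#r) *v b" using b(2) by (simp add: matrix_vector_mul_assoc)
  ultimately show ?thesis unfolding BMR_def by blast
qed

lemma BMR_cons_I1: "y \<in> BMR r \<Longrightarrow> D j *v (y + axis j 1) \<in> BMR (j#r)"
proof -
  assume "y \<in> BMR r"
  then obtain b where b: "b \<in> BR r" "y = Minv r *v b" by (auto simp: BMR_def)
  hence "b + deltaR r j \<in> BR (j#r)" unfolding BR.simps by blast
  moreover have "D j *v (y + axis j 1) = Minv (j#r) *v (b + deltaR r j)"
    using b(2) Minv_delta[of r j]
    by (simp add: matrix_vector_mul_assoc[symmetric] matrix_vector_right_distrib)
  ultimately show ?thesis unfolding BMR_def by auto
qed

lemma zero_BMR: "0 \<in> BMR r"
proof -
  have "0 \<in> BR r" by (induction r) force+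
  thus ?thesis unfolding BMR_def by (auto intro!: image_eqI[of _ _ 0])
qed

lemma Dv: "(D j *v v) $ k = (if k = j then (\<Sum>b\<in>UNIV. v $ b) else v $ k)"
proof (cases "k = j")
  case True
  have "(D j *v v) $ k = (\<Sum>b\<in>UNIV. v $ b)"
    unfolding matrix_vector_mult_def D_def using True
    by (auto intro!: sum.cong simp: mat_def)
  thus ?thesis using True by simp
next
  case False
  have "(D j *v v) $ k = (\<Sum>b\<in>UNIV. (if k = b then 1 else 0) * v $ b)"
    unfolding matrix_vector_mult_def D_def using False
    by (auto intro!: sum.cong simp: mat_def)
  also have "\<dots> = (\<Sum>b\<in>UNIV. if k = b then v $ b else 0)"
    by (rule sum.cong) auto
  finally show ?thesis using False by simp
qed

lemma D_axis: "D j *v axis j 1 = axis j 1"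
  by (auto simp: vec_eq_iff Dv axis_def sum.delta)

lemma sum_axis: "(\<Sum>b\<in>UNIV. axis j (1::int) $ b) = 1"
  by (simp add: axis_def)

lemma u_BMR: "uR r \<in> BMR r"
proof (induction r)
  case Nil thus ?case using zero_BMR[of "[]"] by simp
next
  case (Cons j r)
  have "D j *v (uR r + axis j 1) \<in> BMR (j#r)" using BMR_cons_I1[OF Cons] .
  moreover have "D j *v (uR r + axis j 1) = uR (j#r)"
    by (simp add: matrix_vector_right_distrib D_axis)
  ultimately show ?case by simp
qed

lemma sum_neg1:
  fixes z :: "int^'n::finite"
  assumes "\<forall>k. z $ k \<le> 0" "z \<noteq> 0"
  shows "(\<Sum>b\<in>UNIV. z $ b) \<le> -1"
proof -
  obtain k0 where k0: "z $ k0 \<noteq> 0" using assms(2) by (auto simp: vec_eq_iff)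
  have "(\<Sum>b\<in>UNIV. z $ b) = z $ k0 + (\<Sum>b\<in>UNIV - {k0}. z $ b)"
    by (simp add: sum.remove)
  moreover have "(\<Sum>b\<in>UNIV - {k0}. z $ b) \<le> 0" using assms(1) by (simp add: sum_nonpos)
  moreover have "z $ k0 \<le> -1" using k0 assms(1) by (metis add1_zle_eq linorder_not_less order_antisym_conv zle_diff1_eq diff_0 eq_iff_diff_eq_0 minus_diff_eq) 
  ultimately show ?thesis by linarith
qed

lemma sum_pos1:
  fixes z :: "int^'n::finite"
  assumes "\<forall>k. z $ k \<ge> 0" "z \<noteq> 0"
  shows "(\<Sum>b\<in>UNIV. z $ b) \<ge> 1"
proof -
  have "(\<Sum>b\<in>UNIV. (-z) $ b) \<le> -1" using assms by (intro sum_neg1) auto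
  thus ?thesis by (simp add: sum_negf)
qed

lemma main:
  "\<forall>x\<in>BMR r. \<forall>i. (x - Minv r *v axis i 1 \<in> BMR r \<or> (\<forall>k. (x - Minv r *v axis i 1) $ k \<le> 0))
       \<and> (x + Minv r *v axis i 1 \<in> BMR r \<or> (\<forall>k. (x + Minv r *v axis i 1) $ k \<ge> uR r $ k))"
proof (induction r)
  case Nil
  show ?case
  proof (intro ballI allI)
    fix x i
    assume "x \<in> BMR []"
    hence x0: "x = 0" by (simp add: BMR_def)
    have a: "\<forall>k. (x - Minv [] *v axis i 1) $ k \<le> 0" using x0 by (simp add: axis_def)
    have b: "\<forall>k. (x + Minv [] *v axis i 1) $ k \<ge> uR [] $ k" using x0 by (simp add: axis_def)
    show "(x - Minv [] *v axis i 1 \<in> BMR [] \<or> (\<forall>k. (x - Minv [] *v axis i 1) $ k \<le> 0))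
       \<and> (x + Minv [] *v axis i 1 \<in> BMR [] \<or> (\<forall>k. (x + Minv [] *v axis i 1) $ k \<ge> uR [] $ k))"
      using a b by blast
  qed
next
  case (Cons j r)
  show ?case
  proof (intro ballI allI conjI)
    fix x i
    assume x: "x \<in> BMR (j#r)"
    define m where "m = Minv r *v axis i 1"
    have mm: "Minv (j#r) *v axis i 1 = D j *v m"
      unfolding m_def by (simp add: matrix_vector_mul_assoc)
    obtain y where y: "y \<in> BMR r" and xy: "x = D j *v y \<or> x = D j *v (y + axis j 1)"
      using BMR_cons_E[OF x] by blast
    have IH: "(y - m \<in> BMR r \<or> (\<forall>k. (y - m) $ k \<le> 0))
       \<and> (y + m \<in> BMR r \<or> (\<forall>k. (y + m) $ k \<ge> uR r $ k))"
      using Cons y unfolding m_def by blast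
    show "x - Minv (j#r) *v axis i 1 \<in> BMR (j#r) \<or> (\<forall>k. (x - Minv (j#r) *v axis i 1) $ k \<le> 0)"
    proof (cases "x = D j *v y")
      case True
      hence e: "x - Minv (j#r) *v axis i 1 = D j *v (y - m)"
        unfolding mm by (simp add: matrix_vector_mult_diff_distrib)
      show ?thesis
      proof (cases "y - m \<in> BMR r")
        case True thus ?thesis using e BMR_cons_I0 by metis
      next
        case False
        hence z: "\<forall>k. (y - m) $ k \<le> 0" using IH by blast
        have "\<forall>k. (D j *v (y - m)) $ k \<le> 0"
          using z by (auto simp: Dv intro: sum_nonpos)
        thus ?thesis using e by simp
      qed
    next
      case False
      hence xe: "x = D j *v (y + axis j 1)" using xy by blast
      hence e: "x - Minv (j#r) *v axis i 1 = D j *v ((y - m) + axis j 1)"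
        unfolding mm by (simp add: matrix_vector_mult_diff_distrib[symmetric] algebra_simps)
      show ?thesis
      proof (cases "y - m \<in> BMR r")
        case True thus ?thesis using e BMR_cons_I1 by metis
      next
        case False
        hence z: "\<forall>k. (y - m) $ k \<le> 0" using IH by blast
        show ?thesis
        proof (cases "y - m = 0")
          case True
          thus ?thesis using e BMR_cons_I1[OF zero_BMR, of j r] by simp
        next
          case False
          have s: "(\<Sum>b\<in>UNIV. (y - m) $ b) \<le> -1" using sum_neg1[OF z False] .
          have "\<forall>k. (D j *v ((y - m) + axis j 1)) $ k \<le> 0"
          proof
            fix k
            show "(D j *v ((y - m) + axis j 1)) $ k \<le> 0"
            proof (cases "k = j")
              case True
              have "(\<Sum>b\<in>UNIV. ((y - m) + axis j 1) $ b) = (\<Sum>b\<in>UNIV. (y - m) $ b) + 1"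
                by (simp only: vector_add_component sum.distrib sum_axis)
              thus ?thesis using True s by (simp add: Dv)
            next
              case False
              thus ?thesis using z[rule_format, of k] by (simp add: Dv axis_def)
            qed
          qed
          thus ?thesis using e by simp
        qed
      qed
    qed
    show "x + Minv (j#r) *v axis i 1 \<in> BMR (j#r) \<or> (\<forall>k. (x + Minv (j#r) *v axis i 1) $ k \<ge> uR (j#r) $ k)"
    proof (cases "x = D j *v y")
      case True
      hence e: "x + Minv (j#r) *v axis i 1 = D j *v (y + m)"
        unfolding mm by (simp add: matrix_vector_right_distrib)
      show ?thesis
      proof (cases "y + m \<in> BMR r")
        case True thus ?thesis using e BMR_cons_I0 by metis
      next
        case False
        hence w: "\<forall>k. (y + m) $ k \<ge> uR r $ k" using IH by blast
        show ?thesis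
        proof (cases "y + m = uR r")
          case True
          thus ?thesis using e BMR_cons_I0[OF u_BMR, of j r] by simp
        next
          case False
          have w': "\<forall>k. (y + m - uR r) $ k \<ge> 0" using w by simp
          have "y + m - uR r \<noteq> 0" using False by simp
          hence s: "(\<Sum>b\<in>UNIV. (y + m - uR r) $ b) \<ge> 1" using sum_pos1[OF w'] by blast
          have "\<forall>k. (D j *v (y + m)) $ k \<ge> uR (j#r) $ k"
          proof
            fix k
            show "(D j *v (y + m)) $ k \<ge> uR (j#r) $ k"
            proof (cases "k = j")
              case True
              have "(\<Sum>b\<in>UNIV. (y + m - uR r) $ b) = (\<Sum>b\<in>UNIV. (y + m) $ b) - (\<Sum>b\<in>UNIV. uR r $ b)"
                by (simp only: vector_minus_component sum_subtractf)
              thus ?thesis using True s by (simp add: Dv axis_def)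
            next
              case False
              thus ?thesis using w[rule_format, of k] by (simp add: Dv axis_def)
            qed
          qed
          thus ?thesis using e by simp
        qed
      qed
    next
      case False
      hence xe: "x = D j *v (y + axis j 1)" using xy by blast
      hence e: "x + Minv (j#r) *v axis i 1 = D j *v ((y + m) + axis j 1)"
      proof -
        have "D j *v ((y + m) + axis j 1) = D j *v y + D j *v axis j 1 + D j *v m"
          by (simp add: matrix_vector_right_distrib add_ac)
        thus ?thesis using xe unfolding mm by (simp add: matrix_vector_right_distrib add_ac)
      qed
      show ?thesis
      proof (cases "y + m \<in> BMR r")
        case True thus ?thesis using e BMR_cons_I1 by metis
      next
        case False
        hence w: "\<forall>k. (y + m) $ k \<ge> uR r $ k" using IH by blast
        have "\<forall>k. (D j *v ((y + m) + axis j 1)) $ k \<ge> uR (j#r) $ k"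
        proof
          fix k
          have "(D j *v (y + m)) $ k \<ge> (D j *v uR r) $ k"
            using w by (auto simp: Dv intro: sum_mono)
          thus "(D j *v ((y + m) + axis j 1)) $ k \<ge> uR (j#r) $ k"
            by (simp add: matrix_vector_right_distrib D_axis)
        qed
        thus ?thesis using e by simp
      qed
    qed
  qed
qed

theorem lemma3p4:
  fixes \<omega> :: "'n::finite list" and i :: 'n and x :: "int^'n"
  assumes "x \<in> BM \<omega>"
  shows "(x - M \<omega> *v axis i 1 \<in> BM \<omega> \<or> (\<forall>k. (x - M \<omega> *v axis i 1) $ k \<le> 0))
       \<and> (x + M \<omega> *v axis i 1 \<in> BM \<omega> \<or> (\<forall>k. (x + M \<omega> *v axis i 1) $ k \<ge> u \<omega> $ k))"
proof -
  have x: "x \<in> BMR (rev \<omega>)" using assms by (simp add: BM_eq)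
  show ?thesis unfolding BM_eq M_eq u_def using main[of "rev \<omega>"] x by blast
qed

end
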